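(* Let $\mathfrak g$ be of type $C_n$ and $J\subseteq I$. Then for $s\ge1$, $\mathbf A_{s,J}=\mathbf A^1_{s,J}\sqcup\mathbf A^2_{s,J}$ where $$\mathbf A^1_{s,J}=\{\{\beta_{i_k,j_k}\}_{1\le k\le s}\in\mathbf A^1_s:\ i_k,j_k\notin J\ \forall k\},$$ and, if $n\notin J$, $$\mathbf A^2_{s,J}=\{\{\alpha_{\ell,n}\}\cup\{\beta_{i_k,j_k}\}_{1\le k\le s-1}\in\mathbf A^2_s:\ \ell\notin J,\ \{\beta_{i_k,j_k}\}_{1\le k\le s-1}\in\mathbf A^1_{s-1,J}\},$$ while $\mathbf A^2_{s,J}=\emptyset$ if $n\in J$. Consequently $\sum_{s\ge0}\#\mathbf A_{s,J}=2^{n-\#J}$.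
   Context: Simple roots $\alpha_1,\dots,\alpha_n$ of $C_n$ numbered as in Bourbaki, $I=\{1,\dots,n\}$; $\alpha_{i,j}=\alpha_i+\dots+\alpha_j$ ($i\le j$), $\beta_{k,\ell}=\alpha_{k,n-1}+\alpha_{\ell,n}$ ($k\le\ell\le n-1$), $\theta=\beta_{1,1}$. $\mathbf A^1_s=\{\{\beta_{i_k,j_k}\}_{1\le k\le s}: i_1<\dots<i_s\le j_s<\dots<j_1\le n-1\}$, $\mathbf A^2_s=\{\{\alpha_{\ell,n}\}\cup\{\beta_{i_k,j_k}\}_{1\le k\le s-1}:\{\beta_{i_k,j_k}\}\in\mathbf A^1_{s-1},\ \ell<i_1\}$. For $\eta=\sum_i d_i(\eta)\alpha_i$, $R^+(J)=\{\alpha\in R^+:d_i(\alpha)=0\ \forall i\notin J\}$. A $J$-antichain is a subset $A\subseteq R^+$ with $A\cap R^+(J)=\emptyset$, distinct elements pairwise incomparable (order: $\lambda\le\mu$ iff $\mu-\lambda$ is a nonnegative integer combination of simple roots), and $\alpha-\alpha_j\notin R$ for $\alpha\in A$, $j\in J$. $\Phi(A)=\{\alpha\in R^+:\alpha\ge\beta$ for some $\beta\in A\}$; $A$ is abelian if $\beta_1+\beta_2\notin R$ for all $\beta_1,\beta_2\in\Phi(A)$. $\mathbf A_{s,J}$ is the set of abelian $J$-antichains with $s$ elements; $\mathbf A_{0,J}$ and $\mathbf A^1_{0,J}$ consist of the empty antichain. *)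

theory Defs
  imports Complex_Main "HOL-Library.Function_Algebras"
begin

text \<open>Root system of type C_n, Bourbaki numbering. A weight/root is encoded by its
coefficient vector w.r.t. the simple roots: eta i = d_i(eta) for i in {1..n},
and eta i = 0 outside {1..n}.\<close>

type_synonym wt = "nat \<Rightarrow> int"

definition simple :: "nat \<Rightarrow> wt" where
  "simple i = (\<lambda>k. if k = i then 1 else 0)"

definition alpha :: "nat \<Rightarrow> nat \<Rightarrow> wt" where
  "alpha i j = (\<lambda>k. if i \<le> k \<and> k \<le> j then 1 else 0)"

definition beta :: "nat \<Rightarrow> nat \<Rightarrow> nat \<Rightarrow> wt" where
  "beta n k l = alpha k (n - 1) + alpha l n"

definition posroots :: "nat \<Rightarrow> wt set" where
  "posroots n = {alpha i j | i j. 1 \<le> i \<and> i \<le> j \<and> j \<le> n}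
              \<union> {beta n k l | k l. 1 \<le> k \<and> k \<le> l \<and> l \<le> n - 1}"

definition roots :: "nat \<Rightarrow> wt set" where
  "roots n = posroots n \<union> uminus ` posroots n"

definition rle :: "nat \<Rightarrow> wt \<Rightarrow> wt \<Rightarrow> bool" where
  "rle n lam mu = (\<exists>c :: nat \<Rightarrow> nat. mu - lam = (\<lambda>k. \<Sum>i\<in>{1..n}. int (c i) * simple i k))"

definition posroots_J :: "nat \<Rightarrow> nat set \<Rightarrow> wt set" where
  "posroots_J n J = {a \<in> posroots n. \<forall>i\<in>{1..n} - J. a i = 0}"

definition J_antichain :: "nat \<Rightarrow> nat set \<Rightarrow> wt set \<Rightarrow> bool" where
  "J_antichain n J A =
     (A \<subseteq> posroots n \<and> A \<inter> posroots_J n J = {}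
      \<and> (\<forall>a\<in>A. \<forall>b\<in>A. a \<noteq> b \<longrightarrow> \<not> rle n a b)
      \<and> (\<forall>a\<in>A. \<forall>j\<in>J. a - simple j \<notin> roots n))"

definition Phi :: "nat \<Rightarrow> wt set \<Rightarrow> wt set" where
  "Phi n A = {a \<in> posroots n. \<exists>b\<in>A. rle n b a}"

definition abelian :: "nat \<Rightarrow> wt set \<Rightarrow> bool" where
  "abelian n A = (\<forall>b1\<in>Phi n A. \<forall>b2\<in>Phi n A. b1 + b2 \<notin> roots n)"

definition A_sJ :: "nat \<Rightarrow> nat \<Rightarrow> nat set \<Rightarrow> wt set set" where
  "A_sJ n s J = {A. J_antichain n J A \<and> abelian n A \<and> finite A \<and> card A = s}"

definition idx_chain :: "nat \<Rightarrow> nat \<Rightarrow> (nat \<Rightarrow> nat) \<Rightarrow> (nat \<Rightarrow> nat) \<Rightarrow> bool" where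
  "idx_chain n s i j =
     ((\<forall>k. 1 \<le> k \<longrightarrow> k < s \<longrightarrow> i k < i (Suc k) \<and> j (Suc k) < j k)
      \<and> (1 \<le> s \<longrightarrow> 1 \<le> i 1 \<and> i s \<le> j s \<and> j 1 \<le> n - 1))"

definition betaset :: "nat \<Rightarrow> nat \<Rightarrow> (nat \<Rightarrow> nat) \<Rightarrow> (nat \<Rightarrow> nat) \<Rightarrow> wt set" where
  "betaset n s i j = (\<lambda>k. beta n (i k) (j k)) ` {1..s}"

definition A1 :: "nat \<Rightarrow> nat \<Rightarrow> wt set set" where
  "A1 n s = {betaset n s i j | i j. idx_chain n s i j}"

text \<open>A^2_s: {alpha_{l,n}} union an element of A^1_{s-1}, with l < i_1
 (condition vacuous when s - 1 = 0; 1 <= l <= n so that alpha_{l,n} is a root).\<close>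
definition A2 :: "nat \<Rightarrow> nat \<Rightarrow> wt set set" where
  "A2 n s = {insert (alpha l n) (betaset n (s - 1) i j) | l i j.
               idx_chain n (s - 1) i j \<and> 1 \<le> l \<and> l \<le> n \<and> (1 \<le> s - 1 \<longrightarrow> l < i 1)}"

definition A1_J :: "nat \<Rightarrow> nat \<Rightarrow> nat set \<Rightarrow> wt set set" where
  "A1_J n s J = {betaset n s i j | i j. idx_chain n s i j
                   \<and> (\<forall>k\<in>{1..s}. i k \<notin> J \<and> j k \<notin> J)}"

definition A2_J :: "nat \<Rightarrow> nat \<Rightarrow> nat set \<Rightarrow> wt set set" where
  "A2_J n s J = (if n \<in> J then {} else
     {insert (alpha l n) (betaset n (s - 1) i j) | l i j.
        insert (alpha l n) (betaset n (s - 1) i j) \<in> A2 n s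
        \<and> idx_chain n (s - 1) i j \<and> 1 \<le> l \<and> l \<le> n \<and> (1 \<le> s - 1 \<longrightarrow> l < i 1)
        \<and> l \<notin> J \<and> betaset n (s - 1) i j \<in> A1_J n (s - 1) J})"

end

theory Submission
  imports Defs
begin

lemma alpha_val: "alpha i j x = (if i \<le> x \<and> x \<le> j then 1 else 0)"
  by (simp add: alpha_def)
lemma beta_val: "beta n k l x = (if k \<le> x \<and> x \<le> n - 1 then 1 else 0) + (if l \<le> x \<and> x \<le> n then 1 else 0)"
  by (simp add: beta_def alpha_def)
lemma simple_val: "simple i x = (if x = i then 1 else 0)"
  by (simp add: simple_def)

lemma posroots_cases:
  assumes "r \<in> posroots n"
  obtains i j where "1 \<le> i" "i \<le> j" "j \<le> n" "r = alpha i j"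
  | k l where "1 \<le> k" "k \<le> l" "l \<le> n - 1" "r = beta n k l"
  using assms unfolding posroots_def by blast

lemma alpha_pos: "1 \<le> i \<Longrightarrow> i \<le> j \<Longrightarrow> j \<le> n \<Longrightarrow> alpha i j \<in> posroots n"
  unfolding posroots_def by blast
lemma beta_pos: "1 \<le> k \<Longrightarrow> k \<le> l \<Longrightarrow> l \<le> n - 1 \<Longrightarrow> beta n k l \<in> posroots n"
  unfolding posroots_def by blast

lemma pos_nonneg: "r \<in> posroots n \<Longrightarrow> r x \<ge> 0"
  by (erule posroots_cases) (auto simp: alpha_val beta_val)
lemma pos_out: "r \<in> posroots n \<Longrightarrow> x \<notin> {1..n} \<Longrightarrow> r x = 0"
  by (erule posroots_cases) (auto simp: alpha_val beta_val)
lemma pos_n: "r \<in> posroots n \<Longrightarrow> r n \<le> 1"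
  by (erule posroots_cases) (auto simp: alpha_val beta_val)
lemma pos_int: "r \<in> posroots n \<Longrightarrow> r a \<noteq> 0 \<Longrightarrow> r b \<noteq> 0 \<Longrightarrow> a \<le> x \<Longrightarrow> x \<le> b \<Longrightarrow> r x \<noteq> 0"
  by (erule posroots_cases) (auto simp: alpha_val beta_val split: if_splits)
lemma pos_two: "r \<in> posroots n \<Longrightarrow> r a = 2 \<Longrightarrow> a \<le> x \<Longrightarrow> x \<le> n - 1 \<Longrightarrow> r x = 2"
  by (erule posroots_cases) (auto simp: alpha_val beta_val split: if_splits)
lemma pos_two_n: "r \<in> posroots n \<Longrightarrow> r a = 2 \<Longrightarrow> r n = 1"
  by (erule posroots_cases) (auto simp: alpha_val beta_val split: if_splits)

lemma roots_n: "r \<in> roots n \<Longrightarrow> \<bar>r n\<bar> \<le> 1"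
  unfolding roots_def using pos_n pos_nonneg by fastforce

lemma rle_pos: assumes "a \<in> posroots n" "b \<in> posroots n"
  shows "rle n a b \<longleftrightarrow> (\<forall>x. a x \<le> b x)"
proof
  assume "rle n a b"
  then obtain c where c: "b - a = (\<lambda>k. \<Sum>i\<in>{1..n}. int (c i) * simple i k)"
    unfolding rle_def by blast
  show "\<forall>x. a x \<le> b x"
  proof
    fix x
    have "b x - a x = (\<Sum>i\<in>{1..n}. int (c i) * simple i x)"
      using fun_cong[OF c, of x] by simp
    also have "\<dots> \<ge> 0" by (intro sum_nonneg) (auto simp: simple_val)
    finally show "a x \<le> b x" by simp
  qed
next
  assume h: "\<forall>x. a x \<le> b x"
  define c where "c i = nat (b i - a i)" for i
  have "b - a = (\<lambda>k. \<Sum>i\<in>{1..n}. int (c i) * simple i k)"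
  proof
    fix x
    have "(\<Sum>i\<in>{1..n}. int (c i) * simple i x) = (if x \<in> {1..n} then int (c x) else 0)"
      by (simp add: simple_val if_distrib[of "\<lambda>t. _ * t"] sum.delta cong: if_cong)
    then show "(b - a) x = (\<Sum>i\<in>{1..n}. int (c i) * simple i x)"
      using h pos_out[OF assms(1), of x] pos_out[OF assms(2), of x] by (simp add: c_def)
  qed
  then show "rle n a b" unfolding rle_def by blast
qed


definition E :: "nat \<Rightarrow> nat \<times> nat \<Rightarrow> wt" where
  "E n p = (if snd p = n then alpha (fst p) n else beta n (fst p) (snd p))"

definition Pairs :: "nat \<Rightarrow> (nat \<times> nat) set" where
  "Pairs n = {(k, m). 1 \<le> k \<and> k \<le> m \<and> m \<le> n}"

lemma E_val: "(k, m) \<in> Pairs n \<Longrightarrow>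
  E n (k, m) x = (if k \<le> x \<and> x \<le> n then 1 else 0) + (if m \<le> x \<and> x \<le> n - 1 then 1 else 0)"
  by (auto simp: E_def Pairs_def alpha_val beta_val)

lemma E_pos: "(k, m) \<in> Pairs n \<Longrightarrow> E n (k, m) \<in> posroots n"
  by (auto simp: E_def Pairs_def intro!: alpha_pos beta_pos)

lemma E_at_n: "n \<ge> 2 \<Longrightarrow> p \<in> Pairs n \<Longrightarrow> E n p n = 1"
  by (cases p) (auto simp: E_val Pairs_def)

lemma E_inj: assumes "n \<ge> 2" shows "inj_on (E n) (Pairs n)"
proof (rule inj_onI)
  fix p q assume p: "p \<in> Pairs n" and q: "q \<in> Pairs n" and e: "E n p = E n q"
  obtain k m where pk: "p = (k, m)" by (cases p)
  obtain k' m' where qk: "q = (k', m')" by (cases q)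
  have v: "\<And>x. E n (k,m) x = E n (k',m') x" using e pk qk by simp
  have "k = k'" using v[of k] v[of k'] p q pk qk by (auto simp: E_val Pairs_def split: if_splits)
  moreover have "m = m'" using v[of m] v[of m'] p q pk qk by (auto simp: E_val Pairs_def split: if_splits)
  ultimately show "p = q" using pk qk by simp
qed

lemma pos_n1: assumes "r \<in> posroots n" "r n = 1" "n \<ge> 2" shows "\<exists>p\<in>Pairs n. r = E n p"
  using assms(1)
proof (cases rule: posroots_cases)
  case (1 i j)
  then have "j = n" using assms(2) by (auto simp: alpha_val split: if_splits)
  then show ?thesis using 1 by (intro bexI[of _ "(i, n)"]) (auto simp: E_def Pairs_def)
next
  case (2 k l)
  then show ?thesis using assms(3) by (intro bexI[of _ "(k, l)"]) (auto simp: E_def Pairs_def)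
qed

lemma E_le: assumes "(k, m) \<in> Pairs n" "(k', m') \<in> Pairs n"
  shows "(\<forall>x. E n (k, m) x \<le> E n (k', m') x) \<longleftrightarrow> k' \<le> k \<and> m' \<le> m"
proof
  assume h: "\<forall>x. E n (k, m) x \<le> E n (k', m') x"
  show "k' \<le> k \<and> m' \<le> m"
    using h[rule_format, of k] h[rule_format, of m] assms
    by (auto simp: E_val Pairs_def split: if_splits)
next
  assume "k' \<le> k \<and> m' \<le> m"
  then show "\<forall>x. E n (k, m) x \<le> E n (k', m') x" using assms by (auto simp: E_val)
qed


lemma E_in_J: assumes "(k, m) \<in> Pairs n"
  shows "E n (k, m) \<in> posroots_J n J \<longleftrightarrow> {k..n} \<subseteq> J"
proof -
  have z: "E n (k, m) i = 0 \<longleftrightarrow> \<not> (k \<le> i \<and> i \<le> n)" for i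
    using assms by (auto simp: E_val Pairs_def)
  show ?thesis using assms E_pos[OF assms] unfolding posroots_J_def
    by (auto simp: z Pairs_def)
qed

lemma shift_k: assumes "(k, m) \<in> Pairs n" "(k, m) \<noteq> (n, n)" "n \<ge> 2"
  shows "E n (k, m) - simple k \<in> roots n"
proof -
  have "E n (k, m) - simple k \<in> posroots n"
  proof (cases "m = n")
    case True
    then have "E n (k, m) - simple k = alpha (k+1) n" using assms
      by (auto simp: fun_eq_iff E_val simple_val alpha_val Pairs_def)
    then show ?thesis using assms True by (auto simp: Pairs_def intro!: alpha_pos)
  next
    case False
    show ?thesis
    proof (cases "k < m")
      case True
      then have "E n (k, m) - simple k = beta n (k+1) m" using assms False
        by (auto simp: fun_eq_iff E_val simple_val beta_val Pairs_def)
      then show ?thesis using assms True False by (auto simp: Pairs_def intro!: beta_pos)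
    next
      case km: False
      show ?thesis
      proof (cases "m < n - 1")
        case True
        then have "E n (k, m) - simple k = beta n k (k+1)" using assms False km
          by (auto simp: fun_eq_iff E_val simple_val beta_val Pairs_def)
        then show ?thesis using assms True False km by (auto simp: Pairs_def intro!: beta_pos)
      next
        case m1: False
        then have "E n (k, m) - simple k = alpha (n-1) n" using assms False km
          by (auto simp: fun_eq_iff E_val simple_val alpha_val Pairs_def)
        then show ?thesis using assms m1 False km by (auto simp: Pairs_def intro!: alpha_pos)
      qed
    qed
  qed
  then show ?thesis by (simp add: roots_def)
qed

lemma shift_m: assumes "(k, m) \<in> Pairs n" "k < m" "n \<ge> 2"
  shows "E n (k, m) - simple m \<in> roots n"
proof -
  have "E n (k, m) - simple m \<in> posroots n"
  proof (cases "m = n")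
    case True
    then have "E n (k, m) - simple m = alpha k (n-1)" using assms
      by (auto simp: fun_eq_iff E_val simple_val alpha_val Pairs_def)
    then show ?thesis using assms True by (auto simp: Pairs_def intro!: alpha_pos)
  next
    case False
    show ?thesis
    proof (cases "m < n - 1")
      case True
      then have "E n (k, m) - simple m = beta n k (m+1)" using assms False
        by (auto simp: fun_eq_iff E_val simple_val beta_val Pairs_def)
      then show ?thesis using assms True False by (auto simp: Pairs_def intro!: beta_pos)
    next
      case m1: False
      then have "E n (k, m) - simple m = alpha k n" using assms False
        by (auto simp: fun_eq_iff E_val simple_val alpha_val Pairs_def)
      then show ?thesis using assms m1 False by (auto simp: Pairs_def intro!: alpha_pos)
    qed
  qed
  then show ?thesis by (simp add: roots_def)
qed

lemma neg_root_le: "r \<in> roots n \<Longrightarrow> r x > 0 \<Longrightarrow> r \<in> posroots n"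
proof -
  assume r: "r \<in> roots n" and x: "r x > 0"
  { fix p assume "p \<in> posroots n" "r = - p"
    then have False using x pos_nonneg[of p n x] by simp }
  then show ?thesis using r unfolding roots_def by blast
qed

lemma root_nonzero: "r \<in> roots n \<Longrightarrow> r \<noteq> 0"
proof -
  have "r \<noteq> 0" if "r \<in> posroots n" for r
    using that by (cases rule: posroots_cases) (auto simp: fun_eq_iff alpha_val beta_val)
  then show "r \<in> roots n \<Longrightarrow> r \<noteq> 0" unfolding roots_def by force
qed

lemma shift_other: assumes "(k, m) \<in> Pairs n" "j \<noteq> k" "j \<noteq> m" "1 \<le> j" "j \<le> n" "n \<ge> 2"
  shows "E n (k, m) - simple j \<notin> roots n"
proof
  let ?v = "E n (k, m) - simple j"
  assume r: "?v \<in> roots n"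
  have vk: "?v k > 0" using assms by (auto simp: E_val simple_val Pairs_def)
  have p: "?v \<in> posroots n" using neg_root_le[OF r vk] .
  have vx: "\<And>x. ?v x = E n (k,m) x - simple j x" by simp
  show False
  proof (cases "j < k")
    case True
    then show False using pos_nonneg[OF p, of j] assms by (auto simp: E_val simple_val Pairs_def)
  next
    case jk: False
    show False
    proof (cases "j < m")
      case True
      have "?v n \<noteq> 0" using assms True jk by (auto simp: E_val simple_val Pairs_def)
      moreover have "?v j = 0" using assms True jk by (auto simp: E_val simple_val Pairs_def)
      ultimately show False using pos_int[OF p, of k n j] vk assms True jk
        by (auto simp: Pairs_def)
    next
      case jm: False
      then have mj: "m < j" "m < n" using assms jk by (auto simp: Pairs_def)
      have v2: "?v m = 2" using assms mj by (auto simp: E_val simple_val Pairs_def)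
      show False
      proof (cases "j = n")
        case True
        have "\<not> n \<le> n - 1" using assms by simp
        then show False using pos_two_n[OF p v2] assms mj True by (auto simp: E_val simple_val Pairs_def)
      next
        case False
        then have "j \<le> n - 1" using assms by simp
        then show False using pos_two[OF p v2, of j] assms mj by (auto simp: E_val simple_val Pairs_def)
      qed
    qed
  qed
qed

lemma shift_nn: "E n (n, n) - simple n \<notin> roots n"
proof -
  have "E n (n, n) - simple n = 0" by (auto simp: fun_eq_iff E_def alpha_val simple_val)
  then show ?thesis using root_nonzero by metis
qed

lemma E_J: assumes "(k, m) \<in> Pairs n" "n \<ge> 2" "J \<subseteq> {1..n}"
  shows "(E n (k, m) \<notin> posroots_J n J \<and> (\<forall>j\<in>J. E n (k, m) - simple j \<notin> roots n))
         \<longleftrightarrow> k \<notin> J \<and> m \<notin> J"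
proof
  assume h: "E n (k, m) \<notin> posroots_J n J \<and> (\<forall>j\<in>J. E n (k, m) - simple j \<notin> roots n)"
  show "k \<notin> J \<and> m \<notin> J"
  proof (cases "(k, m) = (n, n)")
    case True
    then show ?thesis using h E_in_J[OF assms(1), of J] by auto
  next
    case False
    have "k \<notin> J" using h shift_k[OF assms(1) False assms(2)] by auto
    moreover have "m \<notin> J"
    proof (cases "k < m")
      case True then show ?thesis using h shift_m[OF assms(1) True assms(2)] by auto
    next
      case False then show ?thesis using \<open>k \<notin> J\<close> assms(1) by (auto simp: Pairs_def)
    qed
    ultimately show ?thesis by simp
  qed
next
  assume h: "k \<notin> J \<and> m \<notin> J"
  have "E n (k, m) \<notin> posroots_J n J" using h assms E_in_J[OF assms(1), of J] by (auto simp: Pairs_def)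
  moreover have "\<forall>j\<in>J. E n (k, m) - simple j \<notin> roots n"
    using h assms shift_other[OF assms(1)] by fastforce
  ultimately show "(E n (k, m) \<notin> posroots_J n J \<and> (\<forall>j\<in>J. E n (k, m) - simple j \<notin> roots n))" by simp
qed


lemma abelian_iff: assumes "A \<subseteq> posroots n" "n \<ge> 2"
  shows "abelian n A \<longleftrightarrow> (\<forall>a\<in>A. a n = 1)"
proof
  assume ab: "abelian n A"
  show "\<forall>a\<in>A. a n = 1"
  proof
    fix a assume aA: "a \<in> A"
    have ap: "a \<in> posroots n" using aA assms by auto
    show "a n = 1"
    proof (rule ccontr)
      assume "a n \<noteq> 1"
      from ap show False
      proof (cases rule: posroots_cases)
        case (1 i j)
        then have jn: "j < n" using \<open>a n \<noteq> 1\<close> by (auto simp: alpha_val split: if_splits)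
        have p1: "alpha i (n-1) \<in> Phi n A"
          unfolding Phi_def using 1 jn aA ap
          by (auto simp: rle_pos alpha_pos alpha_val intro!: bexI[of _ a] alpha_pos)
        have p2: "alpha i n \<in> Phi n A"
          unfolding Phi_def using 1 jn aA ap
          by (auto simp: rle_pos alpha_pos alpha_val intro!: bexI[of _ a] alpha_pos)
        have "alpha i (n-1) + alpha i n \<in> roots n"
          using 1 jn beta_pos[of i i n] by (simp add: beta_def roots_def)
        then show False using ab p1 p2 unfolding abelian_def by blast
      next
        case (2 k l)
        have "\<not> n \<le> n - 1" "l \<le> n" using assms(2) 2 by auto
        then show False using \<open>a n \<noteq> 1\<close> 2 by (auto simp: beta_val)
      qed
    qed
  qed
next
  assume h: "\<forall>a\<in>A. a n = 1"
  have "b n = 1" if bP: "b \<in> Phi n A" for b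
  proof -
    obtain a where a: "a \<in> A" "rle n a b" "b \<in> posroots n" using bP unfolding Phi_def by blast
    then have "a n \<le> b n" using assms rle_pos by blast
    then show ?thesis using h a pos_n[of b n] by force
  qed
  then show "abelian n A" unfolding abelian_def
  proof (intro ballI)
    fix b1 b2 assume h1: "\<And>b. b \<in> Phi n A \<Longrightarrow> b n = 1" and b: "b1 \<in> Phi n A" "b2 \<in> Phi n A"
    have "(b1 + b2) n = 2" using h1[OF b(1)] h1[OF b(2)] by simp
    then show "b1 + b2 \<notin> roots n" using roots_n[of "b1 + b2" n] by auto
  qed
qed

definition nested :: "(nat \<times> nat) set \<Rightarrow> bool" where
  "nested P = (\<forall>p\<in>P. \<forall>q\<in>P. p \<noteq> q \<longrightarrow>
      (fst p < fst q \<and> snd q < snd p) \<or> (fst q < fst p \<and> snd p < snd q))"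

definition Good :: "nat set \<Rightarrow> (nat \<times> nat) set \<Rightarrow> bool" where
  "Good S P = ((\<forall>(a, b)\<in>P. a \<le> b \<and> a \<in> S \<and> b \<in> S) \<and> nested P)"

lemma Good_Pairs: "Good ({1..n} - J) P \<Longrightarrow> P \<subseteq> Pairs n"
  by (auto simp: Good_def Pairs_def)

lemma charA: assumes "n \<ge> 2" "J \<subseteq> {1..n}"
  shows "(J_antichain n J A \<and> abelian n A) \<longleftrightarrow> (\<exists>P. Good ({1..n} - J) P \<and> A = E n ` P)"
proof
  assume h: "J_antichain n J A \<and> abelian n A"
  have Apos: "A \<subseteq> posroots n" using h unfolding J_antichain_def by blast
  have An: "\<forall>a\<in>A. a n = 1" using h abelian_iff[OF Apos assms(1)] by blast
  define P where "P = {p \<in> Pairs n. E n p \<in> A}"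
  have AE: "A = E n ` P"
  proof
    show "A \<subseteq> E n ` P"
    proof
      fix a assume "a \<in> A"
      then obtain p where "p \<in> Pairs n" "a = E n p" using pos_n1[of a n] Apos An assms by blast
      then show "a \<in> E n ` P" using \<open>a \<in> A\<close> by (auto simp: P_def)
    qed
  qed (auto simp: P_def)
  have "Good ({1..n} - J) P" unfolding Good_def
  proof
    show "\<forall>(a, b)\<in>P. a \<le> b \<and> a \<in> {1..n} - J \<and> b \<in> {1..n} - J"
    proof (clarify)
      fix a b assume ab: "(a, b) \<in> P"
      then have pr: "(a, b) \<in> Pairs n" and eA: "E n (a, b) \<in> A" by (auto simp: P_def)
      have "a \<notin> J \<and> b \<notin> J"
        using E_J[OF pr assms] h eA unfolding J_antichain_def by blast
      then show "a \<le> b \<and> a \<in> {1..n} - J \<and> b \<in> {1..n} - J" using pr by (auto simp: Pairs_def)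
    qed
    show "nested P" unfolding nested_def
    proof (intro ballI impI)
      fix p q assume p: "p \<in> P" and q: "q \<in> P" and pq: "p \<noteq> q"
      obtain k m where pk: "p = (k, m)" by (cases p)
      obtain k' m' where qk: "q = (k', m')" by (cases q)
      have pp: "p \<in> Pairs n" "q \<in> Pairs n" using p q by (auto simp: P_def)
      have ne: "E n p \<noteq> E n q" using E_inj[OF assms(1)] pp pq by (auto dest: inj_onD)
      have ea: "E n p \<in> A" "E n q \<in> A" using p q by (auto simp: P_def)
      have nr: "\<not> rle n (E n p) (E n q)" "\<not> rle n (E n q) (E n p)"
        using h ne ea unfolding J_antichain_def by auto
      then show "(fst p < fst q \<and> snd q < snd p) \<or> (fst q < fst p \<and> snd p < snd q)"
        using pp pk qk E_pos rle_pos E_le by (auto simp: not_le)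
    qed
  qed
  then show "\<exists>P. Good ({1..n} - J) P \<and> A = E n ` P" using AE by blast
next
  assume "\<exists>P. Good ({1..n} - J) P \<and> A = E n ` P"
  then obtain P where G: "Good ({1..n} - J) P" and AE: "A = E n ` P" by blast
  have PP: "P \<subseteq> Pairs n" using Good_Pairs[OF G] .
  have Apos: "A \<subseteq> posroots n" using AE PP E_pos by auto
  have "abelian n A" using abelian_iff[OF Apos assms(1)] AE PP E_at_n[OF assms(1)] by auto
  moreover have "J_antichain n J A" unfolding J_antichain_def
  proof (intro conjI)
    show "A \<subseteq> posroots n" by fact
    show "A \<inter> posroots_J n J = {}"
    proof -
      { fix k m assume km: "(k, m) \<in> P"
        then have pr: "(k, m) \<in> Pairs n" using PP by auto
        have "k \<notin> J \<and> m \<notin> J" using km G by (auto simp: Good_def)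
        then have "E n (k, m) \<notin> posroots_J n J" using E_J[OF pr assms] by blast }
      then show ?thesis using AE by auto
    qed
    show "\<forall>a\<in>A. \<forall>j\<in>J. a - simple j \<notin> roots n"
    proof -
      { fix k m assume km: "(k, m) \<in> P"
        then have pr: "(k, m) \<in> Pairs n" using PP by auto
        have "k \<notin> J \<and> m \<notin> J" using km G by (auto simp: Good_def)
        then have "\<forall>j\<in>J. E n (k, m) - simple j \<notin> roots n" using E_J[OF pr assms] by blast }
      then show ?thesis using AE by auto
    qed
    show "\<forall>a\<in>A. \<forall>b\<in>A. a \<noteq> b \<longrightarrow> \<not> rle n a b"
    proof (intro ballI impI)
      fix a b assume "a \<in> A" "b \<in> A" "a \<noteq> b"
      then obtain p q where p: "p \<in> P" "a = E n p" and q: "q \<in> P" "b = E n q" and "p \<noteq> q"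
        using AE by auto
      then have nst: "(fst p < fst q \<and> snd q < snd p) \<or> (fst q < fst p \<and> snd p < snd q)"
        using G unfolding Good_def nested_def by blast
      obtain k m where pk: "p = (k, m)" by (cases p)
      obtain k' m' where qk: "q = (k', m')" by (cases q)
      have pp: "p \<in> Pairs n" "q \<in> Pairs n" using p q PP by auto
      show "\<not> rle n a b" using nst pp pk qk p q E_pos rle_pos E_le by auto
    qed
  qed
  ultimately show "J_antichain n J A \<and> abelian n A" by simp
qed

definition ind :: "(nat \<times> nat) set \<Rightarrow> nat set" where
  "ind P = fst ` P \<union> snd ` P"

lemma nested_inj_fst: "nested P \<Longrightarrow> inj_on fst P"
  unfolding nested_def inj_on_def by fastforce

lemma Good_finite: "finite S \<Longrightarrow> Good S P \<Longrightarrow> finite P"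
  by (rule finite_subset[of P "S \<times> S"]) (auto simp: Good_def)

lemma Good_card: "finite S \<Longrightarrow> Good S P \<Longrightarrow> card P \<le> card S"
proof -
  assume S: "finite S" and G: "Good S P"
  have "card P = card (fst ` P)" using nested_inj_fst G by (simp add: Good_def card_image)
  also have "\<dots> \<le> card S" using G S by (intro card_mono) (auto simp: Good_def)
  finally show ?thesis .
qed

lemma card_Diff2_less: assumes "finite X" "a \<in> X" shows "card (X - {a, b}) < card X"
proof -
  have "card (X - {a, b}) \<le> card (X - {a})" using assms by (intro card_mono) auto
  also have "\<dots> < card X" using assms by (rule card_Diff1_less)
  finally show ?thesis .
qed

lemma outer: assumes "finite P" "nested P" "P \<noteq> {}"
  shows "\<exists>a b. (a, b) \<in> P \<and> (\<forall>(c, d)\<in>P. (c, d) \<noteq> (a, b) \<longrightarrow> a < c \<and> d < b)"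
proof -
  define a where "a = Min (fst ` P)"
  have "a \<in> fst ` P" using assms unfolding a_def by (intro Min_in) auto
  then obtain b where ab: "(a, b) \<in> P" by force
  have *: "a < c \<and> d < b" if cd: "(c, d) \<in> P" "(c, d) \<noteq> (a, b)" for c d
  proof -
    have "c \<in> fst ` P" using cd(1) by force
    then have "a \<le> c" using assms(1) unfolding a_def by simp
    moreover have "(a < c \<and> d < b) \<or> (c < a \<and> b < d)"
      using assms(2)[unfolded nested_def, rule_format, OF cd(1) ab cd(2)] by auto
    ultimately show "a < c \<and> d < b" by auto
  qed
  show ?thesis using ab * by blast
qed

lemma outer_bounds: assumes "(a, b) \<in> P" "\<forall>(c, d)\<in>P. (c, d) \<noteq> (a, b) \<longrightarrow> a < c \<and> d < b"
   "\<forall>(c, d)\<in>P. c \<le> d"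
  shows "\<forall>x\<in>ind P. a \<le> x \<and> x \<le> b" "ind (P - {(a, b)}) = ind P - {a, b}"
proof -
  have pr: "a \<le> c \<and> c \<le> b \<and> a \<le> d \<and> d \<le> b \<and> ((c, d) \<noteq> (a, b) \<longrightarrow> a < c \<and> c < b \<and> a < d \<and> d < b)"
    if cd: "(c, d) \<in> P" for c d
  proof (cases "(c, d) = (a, b)")
    case True
    then show ?thesis using assms(3) cd by auto
  next
    case False
    have "a < c \<and> d < b" using assms(2) cd False by auto
    moreover have "c \<le> d" using assms(3) cd by auto
    ultimately show ?thesis using False by auto
  qed
  show "\<forall>x\<in>ind P. a \<le> x \<and> x \<le> b"
  proof
    fix x assume "x \<in> ind P"
    then obtain c d where "(c, d) \<in> P" "x = c \<or> x = d" unfolding ind_def by force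
    then show "a \<le> x \<and> x \<le> b" using pr by blast
  qed
  show "ind (P - {(a, b)}) = ind P - {a, b}"
  proof
    show "ind (P - {(a, b)}) \<subseteq> ind P - {a, b}"
    proof
      fix x assume "x \<in> ind (P - {(a, b)})"
      then obtain c d where cd: "(c, d) \<in> P" "(c, d) \<noteq> (a, b)" "x = c \<or> x = d" unfolding ind_def by force
      then have "x \<noteq> a" "x \<noteq> b" using pr[OF cd(1)] by auto
      then show "x \<in> ind P - {a, b}" using cd unfolding ind_def by force
    qed
    show "ind P - {a, b} \<subseteq> ind (P - {(a, b)})"
      unfolding ind_def by force
  qed
qed

lemma Good_sub: "Good S P \<Longrightarrow> Good S (P - X)"
  unfolding Good_def nested_def by blast

lemma ind_inj_aux: "finite S \<Longrightarrow> card (ind P) = N \<Longrightarrow> Good S P \<Longrightarrow> Good S Q \<Longrightarrow> ind P = ind Q \<Longrightarrow> P = Q"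
proof (induction N arbitrary: P Q rule: less_induct)
  case (less N)
  show ?case
  proof (cases "P = {}")
    case True
    then show ?thesis using less.prems by (auto simp: ind_def)
  next
    case False
    have QF: "Q \<noteq> {}" using False less.prems(5) by (auto simp: ind_def)
    have fP: "finite P" "finite Q" using less.prems Good_finite by auto
    have le: "\<forall>(c, d)\<in>P. c \<le> d" "\<forall>(c, d)\<in>Q. c \<le> d" using less.prems by (auto simp: Good_def)
    obtain a b where ab: "(a, b) \<in> P" "\<forall>(c, d)\<in>P. (c, d) \<noteq> (a, b) \<longrightarrow> a < c \<and> d < b"
      using outer[OF fP(1) _ False] less.prems by (auto simp: Good_def)
    obtain a' b' where ab': "(a', b') \<in> Q" "\<forall>(c, d)\<in>Q. (c, d) \<noteq> (a', b') \<longrightarrow> a' < c \<and> d < b'"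
      using outer[OF fP(2) _ QF] less.prems by (auto simp: Good_def)
    note B = outer_bounds[OF ab le(1)] and B' = outer_bounds[OF ab' le(2)]
    have "a \<in> ind P" "b \<in> ind P" using ab(1) unfolding ind_def by force+
    moreover have "a' \<in> ind Q" "b' \<in> ind Q" using ab'(1) unfolding ind_def by force+
    ultimately have eq: "a = a'" "b = b'" using B(1) B'(1) less.prems(5)
      by (metis order_antisym)+
    have fI: "finite (ind P)" using fP unfolding ind_def by auto
    have "card (ind (P - {(a, b)})) < N"
      using B(2) less.prems(2) card_Diff2_less[OF fI \<open>a \<in> ind P\<close>] by simp
    then have "P - {(a, b)} = Q - {(a, b)}"
      using less.IH[OF _ less.prems(1) refl Good_sub[OF less.prems(3)] Good_sub[OF less.prems(4)]]
        B(2) B'(2) eq less.prems(5) by auto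
    then show ?thesis using ab(1) ab'(1) eq by blast
  qed
qed

lemma ind_inj: "finite S \<Longrightarrow> inj_on ind {P. Good S P}"
  by (rule inj_onI) (use ind_inj_aux in blast)

lemma ind_surj_aux: "finite U \<Longrightarrow> card U = N \<Longrightarrow> U \<subseteq> S \<Longrightarrow> \<exists>P. Good S P \<and> ind P = U"
proof (induction N arbitrary: U rule: less_induct)
  case (less N)
  show ?case
  proof (cases "U = {}")
    case True
    then show ?thesis by (intro exI[of _ "{}"]) (auto simp: Good_def nested_def ind_def)
  next
    case False
    define a where "a = Min U"
    define b where "b = Max U"
    have abU: "a \<in> U" "b \<in> U" using False less.prems unfolding a_def b_def by auto
    have bnd: "\<forall>x\<in>U. a \<le> x \<and> x \<le> b" using less.prems unfolding a_def b_def by auto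
    have "card (U - {a, b}) < N" using less.prems(2) card_Diff2_less[OF less.prems(1) abU(1), of b] by simp
    then have "\<exists>P. Good S P \<and> ind P = U - {a, b}"
      using less.IH[of "card (U - {a, b})" "U - {a, b}"] less.prems by auto
    then obtain P' where P': "Good S P'" "ind P' = U - {a, b}" by blast
    have inside: "\<forall>(c, d)\<in>P'. a < c \<and> d < b"
    proof (clarify)
      fix c d assume h: "(c, d) \<in> P'"
      have "c \<in> fst ` P'" by (rule rev_image_eqI[OF h]) simp
      moreover have "d \<in> snd ` P'" by (rule rev_image_eqI[OF h]) simp
      ultimately have cU: "c \<in> U - {a, b}" "d \<in> U - {a, b}" using P'(2) unfolding ind_def by blast+
      then have "a \<le> c" "d \<le> b" using bnd by blast+
      then show "a < c \<and> d < b" using cU by auto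
    qed
    have G1: "\<forall>(x, y)\<in>insert (a, b) P'. x \<le> y \<and> x \<in> S \<and> y \<in> S"
    proof -
      have "a \<le> b" using bnd abU by blast
      moreover have "\<forall>(x, y)\<in>P'. x \<le> y \<and> x \<in> S \<and> y \<in> S" using P'(1) unfolding Good_def by simp
      moreover have "a \<in> S" "b \<in> S" using abU less.prems(3) by auto
      ultimately show ?thesis by simp
    qed
    have nP': "nested P'" using P'(1) unfolding Good_def by blast
    have G2: "nested (insert (a, b) P')" unfolding nested_def
    proof (intro ballI impI)
      fix p q assume p: "p \<in> insert (a, b) P'" and q: "q \<in> insert (a, b) P'" and pq: "p \<noteq> q"
      then consider "p = (a, b)" "q \<in> P'" | "q = (a, b)" "p \<in> P'" | "p \<in> P'" "q \<in> P'" by auto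
      then show "(fst p < fst q \<and> snd q < snd p) \<or> (fst q < fst p \<and> snd p < snd q)"
      proof cases
        case 1 then show ?thesis using inside by (cases q) auto
      next
        case 2 then show ?thesis using inside by (cases p) auto
      next
        case 3 then show ?thesis using nP' pq unfolding nested_def by blast
      qed
    qed
    have G: "Good S (insert (a, b) P')" using G1 G2 unfolding Good_def by blast
    have "ind (insert (a, b) P') = U" using P'(2) abU unfolding ind_def by auto
    then show ?thesis using G by blast
  qed
qed

lemma ind_bij: assumes "finite S" shows "bij_betw ind {P. Good S P} (Pow S)"
proof (rule bij_betw_imageI)
  show "inj_on ind {P. Good S P}" using ind_inj[OF assms] .
  show "ind ` {P. Good S P} = Pow S"
  proof
    show "ind ` {P. Good S P} \<subseteq> Pow S" unfolding ind_def Good_def by fastforce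
    show "Pow S \<subseteq> ind ` {P. Good S P}"
    proof
      fix U assume "U \<in> Pow S"
      then have U: "U \<subseteq> S" "finite U" using assms finite_subset by auto
      then obtain P where "Good S P" "ind P = U" using ind_surj_aux[OF U(2) refl U(1)] by blast
      then show "U \<in> ind ` {P. Good S P}" by blast
    qed
  qed
qed

lemma card_Good: "finite S \<Longrightarrow> card {P. Good S P} = 2 ^ card S"
proof -
  assume "finite S"
  then have "card {P. Good S P} = card (Pow S)" by (rule bij_betw_same_card[OF ind_bij])
  then show ?thesis using \<open>finite S\<close> by (simp add: card_Pow)
qed


lemma enum_aux: fixes Q :: "(nat \<times> nat) set" shows "finite Q \<Longrightarrow> card Q = N \<Longrightarrow> nested Q \<Longrightarrow> \<forall>(a, b)\<in>Q. a \<le> b \<Longrightarrow>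
  \<exists>i j. Q = (\<lambda>k. (i k, j k)) ` {1..N} \<and> (\<forall>k. 1 \<le> k \<longrightarrow> k < N \<longrightarrow> i k < i (Suc k) \<and> j (Suc k) < j k)"
proof (induction N arbitrary: Q)
  case 0
  then show ?case by auto
next
  case (Suc M)
  have ne: "Q \<noteq> {}" using Suc.prems by auto
  obtain a b where ab: "(a, b) \<in> Q" "\<forall>(c, d)\<in>Q. (c, d) \<noteq> (a, b) \<longrightarrow> a < c \<and> d < b"
    using outer[OF Suc.prems(1) Suc.prems(3) ne] by blast
  define Q' where "Q' = Q - {(a, b)}"
  have cQ': "card Q' = M" using Suc.prems ab(1) unfolding Q'_def by simp
  have nQ': "nested Q'" using Suc.prems(3) unfolding Q'_def nested_def by blast
  obtain i' j' where ij': "Q' = (\<lambda>k. (i' k, j' k)) ` {1..M}"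
    "\<forall>k. 1 \<le> k \<longrightarrow> k < M \<longrightarrow> i' k < i' (Suc k) \<and> j' (Suc k) < j' k"
    using Suc.IH[OF _ cQ' nQ'] Suc.prems unfolding Q'_def by auto
  define i where "i k = (if k = 1 then a else i' (k - 1))" for k
  define j where "j k = (if k = 1 then b else j' (k - 1))" for k
  have img: "(\<lambda>k. (i k, j k)) ` {2..Suc M} = Q'"
  proof -
    have e: "{2..Suc M} = Suc ` {1..M}" by (simp add: image_Suc_atLeastAtMost)
    have "(\<lambda>k. (i k, j k)) ` (Suc ` {1..M}) = (\<lambda>k. (i (Suc k), j (Suc k))) ` {1..M}"
      by (simp only: image_image)
    also have "\<dots> = (\<lambda>k. (i' k, j' k)) ` {1..M}"
      by (rule image_cong) (auto simp: i_def j_def)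
    finally show ?thesis using ij'(1) e by (simp add: eval_nat_numeral)
  qed
  have "{1..Suc M} = insert 1 {2..Suc M}" by auto
  then have "(\<lambda>k. (i k, j k)) ` {1..Suc M} = insert (a, b) Q'" using img by (simp add: i_def j_def)
  also have "\<dots> = Q" using ab(1) unfolding Q'_def by auto
  finally have Qeq: "Q = (\<lambda>k. (i k, j k)) ` {1..Suc M}" ..
  have mono: "\<forall>k. 1 \<le> k \<longrightarrow> k < Suc M \<longrightarrow> i k < i (Suc k) \<and> j (Suc k) < j k"
  proof (intro allI impI)
    fix k assume k: "1 \<le> k" "k < Suc M"
    show "i k < i (Suc k) \<and> j (Suc k) < j k"
    proof (cases "k = 1")
      case True
      then have "M \<ge> 1" using k by simp
      then have "(i' 1, j' 1) \<in> Q'" using ij'(1) by auto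
      then have "a < i' 1 \<and> j' 1 < b" using ab(2) unfolding Q'_def by auto
      then show ?thesis using True by (simp add: i_def j_def)
    next
      case False
      then have "1 \<le> k - 1" "k - 1 < M" using k by auto
      then have "i' (k-1) < i' (Suc (k-1)) \<and> j' (Suc (k-1)) < j' (k-1)" using ij'(2) by blast
      then show ?thesis using False k by (simp add: i_def j_def)
    qed
  qed
  show ?case using Qeq mono by blast
qed

lemma chain_mono: fixes i j :: "nat \<Rightarrow> nat" assumes "\<forall>k. 1 \<le> k \<longrightarrow> k < s \<longrightarrow> i k < i (Suc k) \<and> j (Suc k) < j k"
  shows "1 \<le> a \<Longrightarrow> a < b \<Longrightarrow> b \<le> s \<Longrightarrow> i a < i b \<and> j b < j a"
proof (induction b)
  case 0 then show ?case by simp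
next
  case (Suc b)
  have b1: "1 \<le> b" "b < s" using Suc.prems by auto
  have st: "i b < i (Suc b) \<and> j (Suc b) < j b" using assms b1 by blast
  show ?case
  proof (cases "a = b")
    case True then show ?thesis using st by simp
  next
    case False
    then have "a < b" using Suc.prems by simp
    then have "i a < i b \<and> j b < j a" using Suc.IH Suc.prems by simp
    then show ?thesis using st by (meson less_trans)
  qed
qed

lemma chain_bounds: assumes "idx_chain n s i j" "k \<in> {1..s}"
  shows "1 \<le> i k \<and> i k \<le> j k \<and> j k \<le> n - 1"
proof -
  have m: "\<forall>k. 1 \<le> k \<longrightarrow> k < s \<longrightarrow> i k < i (Suc k) \<and> j (Suc k) < j k"
   and b: "1 \<le> i 1" "i s \<le> j s" "j 1 \<le> n - 1" using assms unfolding idx_chain_def by auto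
  have "i 1 \<le> i k \<and> j k \<le> j 1" using chain_mono[OF m, of 1 k] assms(2) by (cases "k = 1") auto
  moreover have "i k \<le> i s \<and> j s \<le> j k" using chain_mono[OF m, of k s] assms(2) by (cases "k = s") auto
  ultimately show ?thesis using b by auto
qed

lemma seq_Good:
  assumes ch: "idx_chain n s i j" and J: "\<forall>k\<in>{1..s}. i k \<notin> J \<and> j k \<notin> J" and n2: "n \<ge> 2"
  defines "P \<equiv> (\<lambda>k. (i k, j k)) ` {1..s}"
  shows "Good ({1..n} - J) P" "card P = s" "E n ` P = betaset n s i j" "\<forall>(a, b)\<in>P. b < n \<and> 1 \<le> a"
proof -
  have m: "\<forall>k. 1 \<le> k \<longrightarrow> k < s \<longrightarrow> i k < i (Suc k) \<and> j (Suc k) < j k" using ch unfolding idx_chain_def by auto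
  have bd: "\<And>k. k \<in> {1..s} \<Longrightarrow> 1 \<le> i k \<and> i k \<le> j k \<and> j k \<le> n - 1" using chain_bounds[OF ch] by blast
  have cmp: "\<And>a b. a \<in> {1..s} \<Longrightarrow> b \<in> {1..s} \<Longrightarrow> a < b \<Longrightarrow> i a < i b \<and> j b < j a"
    using chain_mono[OF m] by auto
  have inj: "inj_on (\<lambda>k. (i k, j k)) {1..s}"
  proof (rule inj_onI)
    fix a b assume ab: "a \<in> {1..s}" "b \<in> {1..s}" "(i a, j a) = (i b, j b)"
    show "a = b" using cmp[OF ab(1,2)] cmp[OF ab(2,1)] ab(3) by (cases a b rule: linorder_cases) auto
  qed
  show "card P = s" unfolding P_def using card_image[OF inj] by simp
  show "\<forall>(a, b)\<in>P. b < n \<and> 1 \<le> a" unfolding P_def using bd n2 by fastforce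
  show "Good ({1..n} - J) P" unfolding Good_def
  proof
    show "\<forall>(a, b)\<in>P. a \<le> b \<and> a \<in> {1..n} - J \<and> b \<in> {1..n} - J"
      unfolding P_def using bd J n2 by fastforce
    show "nested P" unfolding nested_def P_def
    proof (intro ballI impI)
      fix p q assume pq: "p \<in> (\<lambda>k. (i k, j k)) ` {1..s}" "q \<in> (\<lambda>k. (i k, j k)) ` {1..s}" "p \<noteq> q"
      obtain a where a: "a \<in> {1..s}" "p = (i a, j a)" using pq(1) by blast
      obtain b where b: "b \<in> {1..s}" "q = (i b, j b)" using pq(2) by blast
      have ab: "a \<in> {1..s}" "b \<in> {1..s}" "p = (i a, j a)" "q = (i b, j b)" "a \<noteq> b" using a b pq(3) by auto
      show "(fst p < fst q \<and> snd q < snd p) \<or> (fst q < fst p \<and> snd p < snd q)"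
        using cmp[OF ab(1,2)] cmp[OF ab(2,1)] ab by (cases a b rule: linorder_cases) auto
    qed
  qed
  show "E n ` P = betaset n s i j" unfolding P_def betaset_def image_image
  proof (rule image_cong[OF refl])
    fix k assume "k \<in> {1..s}"
    then show "E n (i k, j k) = beta n (i k) (j k)" using bd[of k] n2 by (auto simp: E_def)
  qed
qed


lemma E_img_inj: assumes "n \<ge> 2" shows "inj_on (\<lambda>P. E n ` P) {P. P \<subseteq> Pairs n}"
  using inj_on_image_eq_iff[OF E_inj[OF assms]] by (auto intro: inj_onI)

lemma AsJ_eq: assumes n2: "n \<ge> 2" and J: "J \<subseteq> {1..n}"
  shows "A_sJ n s J = (\<lambda>P. E n ` P) ` {P. Good ({1..n} - J) P \<and> card P = s}"
proof -
  have cE: "card (E n ` P) = card P" if "Good ({1..n} - J) P" for P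
    using card_image[OF inj_on_subset[OF E_inj[OF n2] Good_Pairs[OF that]]] .
  have fE: "finite (E n ` P)" if "Good ({1..n} - J) P" for P
    using Good_finite[OF _ that] by simp
  show ?thesis
  proof
    show "A_sJ n s J \<subseteq> (\<lambda>P. E n ` P) ` {P. Good ({1..n} - J) P \<and> card P = s}"
    proof
      fix A assume "A \<in> A_sJ n s J"
      then have h: "J_antichain n J A \<and> abelian n A" "card A = s" unfolding A_sJ_def by auto
      then obtain P where "Good ({1..n} - J) P" "A = E n ` P" using charA[OF n2 J] by blast
      then show "A \<in> (\<lambda>P. E n ` P) ` {P. Good ({1..n} - J) P \<and> card P = s}" using h(2) cE by auto
    qed
    show "(\<lambda>P. E n ` P) ` {P. Good ({1..n} - J) P \<and> card P = s} \<subseteq> A_sJ n s J"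
    proof
      fix A assume "A \<in> (\<lambda>P. E n ` P) ` {P. Good ({1..n} - J) P \<and> card P = s}"
      then obtain P where P: "Good ({1..n} - J) P" "card P = s" "A = E n ` P" by blast
      then have "J_antichain n J A \<and> abelian n A" using charA[OF n2 J] by blast
      then show "A \<in> A_sJ n s J" unfolding A_sJ_def using P cE fE by auto
    qed
  qed
qed

lemma beta_n1: "1 \<le> a \<Longrightarrow> a \<le> b \<Longrightarrow> b \<le> n - 1 \<Longrightarrow> n \<ge> 2 \<Longrightarrow> beta n a b (n - 1) = 2"
  by (simp add: beta_val)

lemma disj: assumes "n \<ge> 2" shows "A1_J n s J \<inter> A2_J n s J = {}"
proof (rule ccontr)
  assume "A1_J n s J \<inter> A2_J n s J \<noteq> {}"
  then obtain X where X1: "X \<in> A1_J n s J" and X2: "X \<in> A2_J n s J" by blast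
  from X1 obtain i j where ij: "X = betaset n s i j" "idx_chain n s i j" unfolding A1_J_def by blast
  from X2 obtain l where "alpha l n \<in> X" unfolding A2_J_def by (auto split: if_splits)
  then obtain k where k: "k \<in> {1..s}" "alpha l n = beta n (i k) (j k)" using ij unfolding betaset_def by auto
  have "beta n (i k) (j k) (n - 1) = 2" using chain_bounds[OF ij(2) k(1)] assms by (intro beta_n1) auto
  moreover have "alpha l n (n - 1) \<le> 1" by (simp add: alpha_val)
  ultimately show False using k(2) by simp
qed


lemma seq_of_Q: assumes G: "Good ({1..n} - J) Q" and lt: "\<forall>(a, b)\<in>Q. b < n" and n2: "n \<ge> 2"
  shows "\<exists>i j. idx_chain n (card Q) i j \<and> (\<forall>k\<in>{1..card Q}. i k \<notin> J \<and> j k \<notin> J)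
     \<and> E n ` Q = betaset n (card Q) i j \<and> Q = (\<lambda>k. (i k, j k)) ` {1..card Q}"
proof -
  have fin: "finite Q" using Good_finite[OF _ G] by simp
  have nQ: "nested Q" and pv: "\<forall>(a, b)\<in>Q. a \<le> b \<and> a \<in> {1..n} - J \<and> b \<in> {1..n} - J"
    using G unfolding Good_def by auto
  have le: "\<forall>(a, b)\<in>Q. a \<le> b" using pv by auto
  obtain i j where ij: "Q = (\<lambda>k. (i k, j k)) ` {1..card Q}"
    "\<forall>k. 1 \<le> k \<longrightarrow> k < card Q \<longrightarrow> i k < i (Suc k) \<and> j (Suc k) < j k"
    using enum_aux[OF fin refl nQ le] by blast
  have mem: "(i k, j k) \<in> Q" if "k \<in> {1..card Q}" for k using ij(1) that by blast
  have memp: "i k \<le> j k \<and> i k \<in> {1..n} - J \<and> j k \<in> {1..n} - J \<and> j k < n" if "k \<in> {1..card Q}" for k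
    using pv lt mem[OF that] by auto
  have ch: "idx_chain n (card Q) i j" unfolding idx_chain_def
  proof (intro conjI impI)
    show "\<forall>k. 1 \<le> k \<longrightarrow> k < card Q \<longrightarrow> i k < i (Suc k) \<and> j (Suc k) < j k" by fact
    assume "1 \<le> card Q"
    then have "1 \<in> {1..card Q}" "card Q \<in> {1..card Q}" by auto
    then have m1: "i 1 \<le> j 1 \<and> i 1 \<in> {1..n} - J \<and> j 1 \<in> {1..n} - J \<and> j 1 < n"
      and m2: "i (card Q) \<le> j (card Q)" using memp by blast+
    then show "1 \<le> i 1" "i (card Q) \<le> j (card Q)" "j 1 \<le> n - 1" by auto
  qed
  have "E n ` Q = betaset n (card Q) i j" unfolding betaset_def
    apply (subst ij(1)) unfolding image_image
  proof (rule image_cong[OF refl])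
    fix k assume "k \<in> {1..card Q}"
    then have "j k < n" using memp by blast
    then show "E n (i k, j k) = beta n (i k) (j k)" by (simp add: E_def)
  qed
  then show ?thesis using ch memp ij(1) by blast
qed

lemma part1_sub: assumes n2: "n \<ge> 2" and J: "J \<subseteq> {1..n}" and s: "s \<ge> 1"
  and G: "Good ({1..n} - J) P" and cP: "card P = s"
  shows "E n ` P \<in> A1_J n s J \<union> A2_J n s J"
proof -
  have fin: "finite P" using Good_finite[OF _ G] by simp
  have nP: "nested P" and pv: "\<forall>(a, b)\<in>P. a \<le> b \<and> a \<in> {1..n} - J \<and> b \<in> {1..n} - J"
    using G unfolding Good_def by auto
  show ?thesis
  proof (cases "\<exists>l. (l, n) \<in> P")
    case False
    have lt: "\<forall>(a, b)\<in>P. b < n" using pv False by fastforce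
    obtain i j where "idx_chain n s i j" "\<forall>k\<in>{1..s}. i k \<notin> J \<and> j k \<notin> J" "E n ` P = betaset n s i j"
      using seq_of_Q[OF G lt n2] cP by blast
    then have "E n ` P \<in> A1_J n s J" unfolding A1_J_def by blast
    then show ?thesis by blast
  next
    case True
    then obtain l where l: "(l, n) \<in> P" by blast
    define Q where "Q = P - {(l, n)}"
    have GQ: "Good ({1..n} - J) Q" unfolding Q_def by (rule Good_sub[OF G])
    have cQ: "card Q = s - 1" unfolding Q_def using fin l cP by simp
    have inQ: "l < a \<and> b < n" if ab: "(a, b) \<in> Q" for a b
    proof -
      have "(a, b) \<in> P" "(a, b) \<noteq> (l, n)" using ab unfolding Q_def by auto
      then have "(a < l \<and> n < b) \<or> (l < a \<and> b < n)"
        using nP l unfolding nested_def by fastforce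
      moreover have "b \<le> n" using pv \<open>(a, b) \<in> P\<close> by auto
      ultimately show ?thesis by auto
    qed
    have lt: "\<forall>(a, b)\<in>Q. b < n" using inQ by auto
    obtain i j where ij: "idx_chain n (s - 1) i j" "\<forall>k\<in>{1..s-1}. i k \<notin> J \<and> j k \<notin> J"
      "E n ` Q = betaset n (s - 1) i j" "Q = (\<lambda>k. (i k, j k)) ` {1..s-1}"
      using seq_of_Q[OF GQ lt n2] cQ by auto
    have li: "1 \<le> s - 1 \<longrightarrow> l < i 1"
    proof
      assume "1 \<le> s - 1"
      then have "(i 1, j 1) \<in> Q" using ij(4) by auto
      then show "l < i 1" using inQ by auto
    qed
    have lv: "1 \<le> l" "l \<le> n" "l \<notin> J" "n \<notin> J" using pv l by auto
    have EP: "E n ` P = insert (alpha l n) (betaset n (s - 1) i j)"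
    proof -
      have "P = insert (l, n) Q" using l unfolding Q_def by auto
      then show ?thesis using ij(3) by (simp add: E_def)
    qed
    have A1: "betaset n (s - 1) i j \<in> A1_J n (s - 1) J" unfolding A1_J_def using ij(1,2) by blast
    have A2: "insert (alpha l n) (betaset n (s - 1) i j) \<in> A2 n s" unfolding A2_def
      using ij(1) li lv by blast
    have "E n ` P \<in> A2_J n s J" unfolding A2_J_def EP using lv A1 A2 ij(1) li by auto
    then show ?thesis by blast
  qed
qed


lemma part1_sup: assumes n2: "n \<ge> 2" and J: "J \<subseteq> {1..n}" and s: "s \<ge> 1"
  and X: "X \<in> A1_J n s J \<union> A2_J n s J"
  shows "\<exists>P. Good ({1..n} - J) P \<and> card P = s \<and> X = E n ` P"
proof (cases "X \<in> A1_J n s J")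
  case True
  then obtain i j where ij: "X = betaset n s i j" "idx_chain n s i j" "\<forall>k\<in>{1..s}. i k \<notin> J \<and> j k \<notin> J"
    unfolding A1_J_def by blast
  note sg = seq_Good[OF ij(2) ij(3) n2]
  show ?thesis using sg(1,2,3) ij(1) by metis
next
  case False
  then have X2: "X \<in> A2_J n s J" using X by blast
  then have nJ: "n \<notin> J" unfolding A2_J_def by (auto split: if_splits)
  obtain l i j where lij: "X = insert (alpha l n) (betaset n (s - 1) i j)" "idx_chain n (s - 1) i j"
    "1 \<le> l" "l \<le> n" "1 \<le> s - 1 \<longrightarrow> l < i 1" "l \<notin> J" "betaset n (s - 1) i j \<in> A1_J n (s - 1) J"
    using X2 nJ unfolding A2_J_def by auto
  obtain i' j' where ij': "betaset n (s - 1) i j = betaset n (s - 1) i' j'" "idx_chain n (s - 1) i' j'"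
    "\<forall>k\<in>{1..s-1}. i' k \<notin> J \<and> j' k \<notin> J"
    using lij(7) unfolding A1_J_def by blast
  define P' where "P' = (\<lambda>k. (i' k, j' k)) ` {1..s-1}"
  note sg = seq_Good[OF ij'(2) ij'(3) n2, folded P'_def]
  have PP': "P' \<subseteq> Pairs n" using Good_Pairs[OF sg(1)] .
  have inP: "l < a \<and> b < n" if ab: "(a, b) \<in> P'" for a b
  proof -
    have "E n (a, b) \<in> betaset n (s - 1) i j" using sg(3) ij'(1) ab by blast
    then obtain k where k: "k \<in> {1..s-1}" "E n (a, b) = beta n (i k) (j k)" unfolding betaset_def by blast
    have bk: "1 \<le> i k \<and> i k \<le> j k \<and> j k \<le> n - 1" using chain_bounds[OF lij(2) k(1)] .
    have "j k \<noteq> n" using bk n2 by auto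
    then have "E n (i k, j k) = beta n (i k) (j k)" by (simp add: E_def)
    moreover have "(i k, j k) \<in> Pairs n" using bk n2 by (auto simp: Pairs_def)
    moreover have "(a, b) \<in> Pairs n" using PP' ab by blast
    ultimately have "(a, b) = (i k, j k)" using inj_onD[OF E_inj[OF n2]] k(2) by metis
    moreover have "i 1 \<le> i k"
    proof (cases "k = 1")
      case False
      have m: "\<forall>k. 1 \<le> k \<longrightarrow> k < s - 1 \<longrightarrow> i k < i (Suc k) \<and> j (Suc k) < j k"
        using lij(2) unfolding idx_chain_def by blast
      show ?thesis using chain_mono[OF m, of 1 k] k(1) False by auto
    qed simp
    moreover have "l < i 1" using lij(5) k(1) by auto
    moreover have "b < n" using sg(4) ab by auto
    ultimately show ?thesis by auto
  qed
  define P where "P = insert (l, n) P'"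
  have notin: "(l, n) \<notin> P'" using inP by blast
  have fP': "finite P'" unfolding P'_def by simp
  have cP: "card P = s" unfolding P_def using notin fP' sg(2) s by simp
  have GP1: "\<forall>(a, b)\<in>P. a \<le> b \<and> a \<in> {1..n} - J \<and> b \<in> {1..n} - J"
    using sg(1) lij(3,4,6) nJ n2 unfolding P_def Good_def by auto
  have nP': "nested P'" using sg(1) unfolding Good_def by blast
  have GP2: "nested P" unfolding nested_def
  proof (intro ballI impI)
    fix p q assume p: "p \<in> P" and q: "q \<in> P" and pq: "p \<noteq> q"
    then consider "p = (l, n)" "q \<in> P'" | "q = (l, n)" "p \<in> P'" | "p \<in> P'" "q \<in> P'"
      unfolding P_def by auto
    then show "(fst p < fst q \<and> snd q < snd p) \<or> (fst q < fst p \<and> snd p < snd q)"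
    proof cases
      case 1 then show ?thesis using inP by (cases q) auto
    next
      case 2 then show ?thesis using inP by (cases p) auto
    next
      case 3 then show ?thesis using nP' pq unfolding nested_def by blast
    qed
  qed
  have "E n ` P = X" unfolding P_def using lij(1) sg(3) ij'(1) by (simp add: E_def)
  then show ?thesis using GP1 GP2 cP unfolding Good_def by blast
qed

theorem mainTheorem11:
  fixes n :: nat and J :: "nat set"
  assumes "n \<ge> 2" and "J \<subseteq> {1..n}"
  shows "(\<forall>s\<ge>1. A_sJ n s J = A1_J n s J \<union> A2_J n s J
                  \<and> A1_J n s J \<inter> A2_J n s J = {})
         \<and> (\<lambda>s. real (card (A_sJ n s J))) sums (2 ^ (n - card J))"
proof
  note n2 = assms(1) and J = assms(2)
  define S0 where "S0 = {1..n} - J"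
  show "\<forall>s\<ge>1. A_sJ n s J = A1_J n s J \<union> A2_J n s J \<and> A1_J n s J \<inter> A2_J n s J = {}"
  proof (intro allI impI conjI)
    fix s :: nat assume s: "1 \<le> s"
    show "A1_J n s J \<inter> A2_J n s J = {}" by (rule disj[OF n2])
    show "A_sJ n s J = A1_J n s J \<union> A2_J n s J"
    proof
      show "A_sJ n s J \<subseteq> A1_J n s J \<union> A2_J n s J"
        unfolding AsJ_eq[OF n2 J] using part1_sub[OF n2 J s] by blast
      show "A1_J n s J \<union> A2_J n s J \<subseteq> A_sJ n s J"
        unfolding AsJ_eq[OF n2 J] using part1_sup[OF n2 J s] by blast
    qed
  qed
  have fS: "finite S0" unfolding S0_def by simp
  have cS: "card S0 = n - card J" unfolding S0_def using J by (simp add: card_Diff_subset finite_subset)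
  define G where "G = {P. Good S0 P}"
  define C where "C s = {P \<in> G. card P = s}" for s
  have cA: "card (A_sJ n s J) = card (C s)" for s
  proof -
    have "A_sJ n s J = (\<lambda>P. E n ` P) ` C s" unfolding AsJ_eq[OF n2 J] C_def G_def S0_def by simp
    moreover have "inj_on (\<lambda>P. E n ` P) (C s)"
    proof (rule inj_on_subset[OF E_img_inj[OF n2]])
      show "C s \<subseteq> {P. P \<subseteq> Pairs n}"
      proof
        fix P assume "P \<in> C s"
        then have "Good ({1..n} - J) P" unfolding C_def G_def S0_def by blast
        then show "P \<in> {P. P \<subseteq> Pairs n}" using Good_Pairs by blast
      qed
    qed
    ultimately show ?thesis by (simp add: card_image)
  qed
  have Cz: "C s = {}" if "s \<notin> {0..card S0}" for s
    using that Good_card[OF fS] unfolding C_def G_def by fastforce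
  have fG: "finite G"
  proof -
    have "G \<subseteq> Pow (S0 \<times> S0)" unfolding G_def Good_def by auto
    then show ?thesis using fS by (auto intro: finite_subset)
  qed
  have GU: "G = (\<Union>s\<in>{0..card S0}. C s)"
    unfolding C_def G_def using Good_card[OF fS] by auto
  have "card G = (\<Sum>s\<in>{0..card S0}. card (C s))"
    unfolding GU by (rule card_UN_disjoint) (auto simp: C_def intro: finite_subset[OF _ fG])
  then have sumeq: "(\<Sum>s\<in>{0..card S0}. real (card (A_sJ n s J))) = 2 ^ (n - card J)"
    using card_Good[OF fS] cS cA unfolding G_def
    by (simp flip: of_nat_sum)
  have "(\<lambda>s. real (card (A_sJ n s J))) sums (\<Sum>s\<in>{0..card S0}. real (card (A_sJ n s J)))"
    by (rule sums_finite) (auto simp: cA Cz)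
  then show "(\<lambda>s. real (card (A_sJ n s J))) sums (2 ^ (n - card J))" using sumeq by simp
qed

end
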